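(* Let $X=\mathrm{Cay}(G,S)$ be a Cayley graph of a group $G$ with respect to a finite generating set $S$, and let $B_X(n)$ be the ball of radius $n$ around the identity. Suppose there are real numbers $r>0$ and $s$ such that $|B_X(n)|<r^{n^{s}}$ for every positive integer $n$. Then $\mathrm{epdim}(G)\leq s$.
   Context: For a group $G$, $\mathcal M(G)$ denotes the set of symmetric probability measures $\mu$ on $G$ ($\mu(g)=\mu(g^{-1})$). For $\mu\in\mathcal M(G)$ and $\lambda>0$, $G^\mu(\lambda)$ is the random multigraph with vertex set $G$ in which the number of parallel edges between distinct $g,h$ is an independent Poisson random variable with mean $\lambda\mu(g^{-1}h)$; $\lambda_c(\mu):=\sup\{\lambda : \Pr(G^\mu(\lambda)\text{ has an infinite component})=0\}$ (always $\lambda_c(\mu)\ge1$). Fix a finite generating set and let $|g|$ be the word length. For $r\in(0,1)$ and $s\in(0,1]$ let ${}_e\mathcal M_s^r(G):=\{\mu\in\mathcal M(G) : \mu(g)<r^{|g|^s}\ \forall g\in G\}$. The exponential percolation dimension is $\mathrm{epdim}(G):=\sup\{s : \exists r\in(0,1) \text{ such that } \inf_{\mu\in{}_e\mathcal M_s^r(G)}\lambda_c(\mu)=1\}$, i.e. the supremum of those $s$ for which, for some $r$, there is a sequence $\mu_i\in{}_e\mathcal M_s^r(G)$ with $\lambda_c(\mu_i)\to1$. It does not depend on the choice of generating set. *)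

theory Defs
  imports "HOL-Probability.Probability"
begin

text \<open>Groups are modelled by the type class group_add (not necessarily commutative);
  the group G is the whole type, written additively: g^{-1} h is (- g + h).\<close>

definition generates :: "'a::group_add set \<Rightarrow> bool" where
  "generates S \<longleftrightarrow> (\<forall>g. \<exists>xs. set xs \<subseteq> S \<union> uminus ` S \<and> sum_list xs = g)"

definition word_length :: "'a::group_add set \<Rightarrow> 'a \<Rightarrow> nat" where
  "word_length S g = (LEAST n. \<exists>xs. length xs = n \<and> set xs \<subseteq> S \<union> uminus ` S \<and> sum_list xs = g)"

definition ball_X :: "'a::group_add set \<Rightarrow> nat \<Rightarrow> 'a set" where
  "ball_X S n = {g. word_length S g \<le> n}"

definition sym_measures :: "'a::group_add pmf set" where
  "sym_measures = {\<mu>. \<forall>g. pmf \<mu> g = pmf \<mu> (- g)}"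

definition poisson :: "real \<Rightarrow> nat pmf" where
  "poisson c = (if c = 0 then return_pmf 0 else poisson_pmf c)"

definition pairs :: "'a set set" where
  "pairs = {{g, h} | g h. g \<noteq> h}"

text \<open>mu(g^{-1} h) for the edge e = {g,h} (well defined for symmetric mu).\<close>
definition edge_weight :: "'a::group_add pmf \<Rightarrow> 'a set \<Rightarrow> real" where
  "edge_weight \<mu> e = (let g = (SOME g. g \<in> e); h = (SOME h. h \<in> e \<and> h \<noteq> g) in pmf \<mu> (- g + h))"

text \<open>The random multigraph G^mu(lambda): omega e is the number of parallel edges on e.\<close>
definition multigraph_space :: "'a::group_add pmf \<Rightarrow> real \<Rightarrow> ('a set \<Rightarrow> nat) measure" where
  "multigraph_space \<mu> t = PiM pairs (\<lambda>e. measure_pmf (poisson (t * edge_weight \<mu> e)))"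

definition adjacent :: "('a set \<Rightarrow> nat) \<Rightarrow> ('a \<times> 'a) set" where
  "adjacent \<omega> = {(g, h). g \<noteq> h \<and> \<omega> {g, h} > 0}"

definition has_infinite_component :: "('a set \<Rightarrow> nat) \<Rightarrow> bool" where
  "has_infinite_component \<omega> \<longleftrightarrow> (\<exists>g. infinite {h. (g, h) \<in> (adjacent \<omega>)\<^sup>*})"

definition lambda_c :: "'a::group_add pmf \<Rightarrow> ereal" where
  "lambda_c \<mu> = Sup (ereal ` {t. t > 0 \<and>
      measure (multigraph_space \<mu> t)
        {\<omega> \<in> space (multigraph_space \<mu> t). has_infinite_component \<omega>} = 0})"

definition exp_measures :: "'a::group_add set \<Rightarrow> real \<Rightarrow> real \<Rightarrow> 'a pmf set" where
  "exp_measures S s r = {\<mu> \<in> sym_measures.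
      \<forall>g. pmf \<mu> g < r powr (real (word_length S g) powr s)}"

definition epdim :: "'a::group_add set \<Rightarrow> ereal" where
  "epdim S = Sup (ereal ` {s. 0 < s \<and> s \<le> 1 \<and>
      (\<exists>r. 0 < r \<and> r < 1 \<and> (INF \<mu>\<in>exp_measures S s r. lambda_c \<mu>) = 1)})"

end

theory Submission
  imports Defs "HOL-Real_Asymp.Real_Asymp" "HOL-Library.Transitive_Closure_Table"
begin


lemma wl_ex:
  assumes "generates S"
  shows "\<exists>xs. length xs = word_length S g \<and> set xs \<subseteq> S \<union> uminus ` S \<and> sum_list xs = g"
proof -
  from assms obtain xs where "set xs \<subseteq> S \<union> uminus ` S \<and> sum_list xs = g"
    unfolding generates_def by blast
  then have "\<exists>n xs. length xs = n \<and> set xs \<subseteq> S \<union> uminus ` S \<and> sum_list xs = g" by blast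
  then show ?thesis unfolding word_length_def by (rule LeastI_ex)
qed

lemma wl_le: "set xs \<subseteq> S \<union> uminus ` S \<Longrightarrow> sum_list xs = g \<Longrightarrow> word_length S g \<le> length xs"
  unfolding word_length_def by (rule Least_le) blast

lemma ball_finite:
  assumes "finite S" "generates S"
  shows "finite (ball_X S n)"
proof -
  have "ball_X S n \<subseteq> sum_list ` {xs. set xs \<subseteq> S \<union> uminus ` S \<and> length xs \<le> n}"
  proof
    fix g assume "g \<in> ball_X S n"
    then have "word_length S g \<le> n" unfolding ball_X_def by simp
    with wl_ex[OF assms(2), of g] show "g \<in> sum_list ` {xs. set xs \<subseteq> S \<union> uminus ` S \<and> length xs \<le> n}"
      by force
  qed
  moreover have "finite {xs. set xs \<subseteq> S \<union> uminus ` S \<and> length xs \<le> n}"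
    using finite_lists_length_le[of "S \<union> uminus ` S" n] assms(1) by simp
  ultimately show ?thesis by (meson finite_imageI finite_subset)
qed

lemma zero_in_ball: "(0::'a::group_add) \<in> ball_X S n"
  using wl_le[of "[]" S 0] unfolding ball_X_def by simp

lemma countable_G:
  fixes S :: "'a::group_add set"
  assumes "finite S" "generates S"
  shows "countable (UNIV::'a set)"
proof -
  have "UNIV \<subseteq> sum_list ` lists (S \<union> uminus ` S)"
  proof
    fix g :: 'a
    obtain xs where "set xs \<subseteq> S \<union> uminus ` S \<and> sum_list xs = g"
      using assms(2) unfolding generates_def by blast
    then show "g \<in> sum_list ` lists (S \<union> uminus ` S)" by auto
  qed
  moreover have "countable (sum_list ` lists (S \<union> uminus ` S))"
    using assms(1) by (intro countable_image countable_lists countable_finite) simp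
  ultimately show ?thesis by (rule countable_subset)
qed



fun path_edges :: "'a \<Rightarrow> 'a list \<Rightarrow> 'a set set" where
  "path_edges g [] = {}"
| "path_edges g (w # ws) = insert {g, w} (path_edges w ws)"

definition rho :: "'a::group_add pmf \<Rightarrow> real \<Rightarrow> 'a \<Rightarrow> real" where
  "rho \<mu> t x = 1 - exp (- (t * pmf \<mu> x))"

fun walkw :: "'a::group_add pmf \<Rightarrow> real \<Rightarrow> 'a \<Rightarrow> 'a list \<Rightarrow> real" where
  "walkw \<mu> t g [] = 1"
| "walkw \<mu> t g (w # ws) = rho \<mu> t (- g + w) * walkw \<mu> t w ws"

definition Mf :: "'a::group_add pmf \<Rightarrow> real \<Rightarrow> 'a set \<Rightarrow> nat measure" where
  "Mf \<mu> t e = measure_pmf (poisson (t * edge_weight \<mu> e))"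

definition OpenE :: "'a::group_add pmf \<Rightarrow> real \<Rightarrow> 'a \<Rightarrow> 'a list \<Rightarrow> ('a set \<Rightarrow> nat) set" where
  "OpenE \<mu> t g ws = prod_emb pairs (Mf \<mu> t) (path_edges g ws \<inter> pairs)
      (Pi\<^sub>E (path_edges g ws \<inter> pairs) (\<lambda>_. {0<..}))"

lemma ms_eq: "multigraph_space \<mu> t = Pi\<^sub>M pairs (Mf \<mu> t)"
  unfolding multigraph_space_def Mf_def by simp

lemma rho_nonneg: "t \<ge> 0 \<Longrightarrow> rho \<mu> t x \<ge> 0"
  unfolding rho_def by simp

lemma walkw_nonneg: "t \<ge> 0 \<Longrightarrow> walkw \<mu> t g ws \<ge> 0"
  by (induction ws arbitrary: g) (auto simp: rho_nonneg)

lemma edge_weight_eq: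
  assumes sym: "\<mu> \<in> sym_measures" and gh: "g \<noteq> h"
  shows "edge_weight \<mu> {g, h} = pmf \<mu> (- g + h)"
proof -
  define a where "a = (SOME x. x \<in> {g, h})"
  have a: "a \<in> {g, h}" unfolding a_def by (rule someI[of _ g]) simp
  define b where "b = (SOME y. y \<in> {g, h} \<and> y \<noteq> a)"
  have "\<exists>y. y \<in> {g, h} \<and> y \<noteq> a" using a gh by blast
  then have b: "b \<in> {g, h} \<and> b \<noteq> a" unfolding b_def by (rule someI_ex)
  have ew: "edge_weight \<mu> {g, h} = pmf \<mu> (- a + b)"
    unfolding edge_weight_def Let_def a_def b_def by (rule refl)
  show ?thesis
  proof (cases "a = g")
    case True
    then have "b = h" using b by auto
    then show ?thesis using ew True by simp
  next
    case False
    then have "a = h" "b = g" using a b by auto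
    moreover have "pmf \<mu> (- h + g) = pmf \<mu> (- (- g + h))"
      by (simp add: minus_add)
    moreover have "pmf \<mu> (- g + h) = pmf \<mu> (- (- g + h))"
      using sym unfolding sym_measures_def by blast
    ultimately show ?thesis using ew by simp
  qed
qed

lemma poisson_pos:
  assumes "c \<ge> 0"
  shows "emeasure (measure_pmf (poisson c)) {0<..} = ennreal (1 - exp (- c))"
proof (cases "c = 0")
  case True
  then show ?thesis by (simp add: poisson_def)
next
  case False
  then have c: "c > 0" using assms by simp
  have "measure (measure_pmf (poisson c)) {0<..} = 1 - measure (measure_pmf (poisson c)) {0}"
  proof -
    have "{0<..} = UNIV - {0::nat}" by auto
    then show ?thesis using measure_pmf.prob_compl[of "{0::nat}" "poisson c"] by simp
  qed
  also have "measure (measure_pmf (poisson c)) {0} = exp (- c)"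
    using c False by (simp add: poisson_def measure_pmf_single pmf_poisson)
  finally show ?thesis by (simp add: measure_pmf.emeasure_eq_measure)
qed

lemma path_edges_subset: "e \<in> path_edges g ws \<Longrightarrow> e \<subseteq> set (g # ws)"
  by (induction ws arbitrary: g) auto

lemma path_edges_pairs: "distinct (g # ws) \<Longrightarrow> path_edges g ws \<subseteq> pairs"
  by (induction ws arbitrary: g) (auto simp: pairs_def)

lemma finite_path_edges: "finite (path_edges g ws)"
  by (induction ws arbitrary: g) auto

lemma prod_path:
  assumes sym: "\<mu> \<in> sym_measures" and t: "t \<ge> 0"
  shows "distinct (g # ws) \<Longrightarrow>
    (\<Prod>e\<in>path_edges g ws. emeasure (Mf \<mu> t e) {0<..}) = ennreal (walkw \<mu> t g ws)"
proof (induction ws arbitrary: g)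
  case Nil
  then show ?case by simp
next
  case (Cons w ws)
  have notin: "{g, w} \<notin> path_edges w ws"
    using Cons.prems path_edges_subset[of "{g,w}" w ws] by auto
  have gw: "g \<noteq> w" using Cons.prems by auto
  have e: "emeasure (Mf \<mu> t {g, w}) {0<..} = ennreal (rho \<mu> t (- g + w))"
    unfolding Mf_def rho_def using edge_weight_eq[OF sym gw] t
    by (simp add: poisson_pos)
  have "(\<Prod>e\<in>path_edges g (w # ws). emeasure (Mf \<mu> t e) {0<..})
      = emeasure (Mf \<mu> t {g, w}) {0<..} * (\<Prod>e\<in>path_edges w ws. emeasure (Mf \<mu> t e) {0<..})"
    using prod.insert[OF finite_path_edges notin] by simp
  also have "\<dots> = ennreal (rho \<mu> t (- g + w)) * ennreal (walkw \<mu> t w ws)"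
    using e Cons.IH Cons.prems by simp
  also have "\<dots> = ennreal (walkw \<mu> t g (w # ws))"
    unfolding walkw.simps by (rule ennreal_mult[symmetric, OF rho_nonneg[OF t] walkw_nonneg[OF t]])
  finally show ?case .
qed

lemma OpenE_sets: "OpenE \<mu> t g ws \<in> sets (Pi\<^sub>M pairs (Mf \<mu> t))"
  unfolding OpenE_def
  by (rule sets_PiM_I) (simp_all add: finite_path_edges Mf_def)

lemma emeasure_OpenE:
  assumes sym: "\<mu> \<in> sym_measures" and t: "t \<ge> 0" and d: "distinct (g # ws)"
  shows "emeasure (Pi\<^sub>M pairs (Mf \<mu> t)) (OpenE \<mu> t g ws) = ennreal (walkw \<mu> t g ws)"
proof -
  have sub: "path_edges g ws \<inter> pairs = path_edges g ws" using path_edges_pairs[OF d] by blast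
  have "emeasure (Pi\<^sub>M pairs (Mf \<mu> t)) (OpenE \<mu> t g ws)
      = (\<Prod>e\<in>path_edges g ws \<inter> pairs. emeasure (Mf \<mu> t e) {0<..})"
    unfolding OpenE_def
    by (rule emeasure_PiM_emb) (simp_all add: finite_path_edges Mf_def prob_space_measure_pmf)
  then show ?thesis using prod_path[OF sym t d] sub by simp
qed

lemma path_pos:
  "rtrancl_path (\<lambda>a b. (a, b) \<in> adjacent \<omega>) g ws h \<Longrightarrow> e \<in> path_edges g ws \<Longrightarrow> 0 < \<omega> e"
  by (induction rule: rtrancl_path.induct) (auto simp: adjacent_def)

lemma path_open:
  assumes "\<omega> \<in> space (Pi\<^sub>M pairs (Mf \<mu> t))"
    and "rtrancl_path (\<lambda>a b. (a, b) \<in> adjacent \<omega>) g ws h"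
  shows "\<omega> \<in> OpenE \<mu> t g ws"
proof -
  have "\<omega> \<in> Pi\<^sub>E pairs (\<lambda>i. space (Mf \<mu> t i))" using assms(1) by (simp add: space_PiM)
  moreover have "restrict \<omega> (path_edges g ws \<inter> pairs) \<in> Pi\<^sub>E (path_edges g ws \<inter> pairs) (\<lambda>_. {0<..})"
    using path_pos[OF assms(2)] by (simp add: restrict_PiE_iff)
  ultimately show ?thesis unfolding OpenE_def prod_emb_def by simp
qed

lemma path_last: "rtrancl_path r x xs y \<Longrightarrow> last (x # xs) = y"
  by (induction rule: rtrancl_path.induct) auto



lemma translate_sum:
  fixes f :: "'a::group_add \<Rightarrow> ennreal"
  shows "(\<integral>\<^sup>+ w. f (- g + w) \<partial>count_space UNIV) = (\<integral>\<^sup>+ x. f x \<partial>count_space UNIV)"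
proof (rule nn_integral_bij_count_space)
  show "bij_betw (\<lambda>w. - g + w) UNIV UNIV"
    by (rule bij_betwI[where g = "\<lambda>x. g + x"]) (auto simp: add.assoc[symmetric])
qed

lemma sum_len:
  assumes t: "t \<ge> 0"
  shows "(\<integral>\<^sup>+ ws. ennreal (walkw \<mu> t g ws) * indicator {ws. length ws = k} ws \<partial>count_space UNIV)
      = (\<integral>\<^sup>+ x. ennreal (rho \<mu> t x) \<partial>count_space UNIV) ^ k"
proof (induction k arbitrary: g)
  case 0
  have "(\<integral>\<^sup>+ ws. ennreal (walkw \<mu> t g ws) * indicator {ws. length ws = 0} ws \<partial>count_space UNIV)
      = (\<integral>\<^sup>+ ws. indicator {[]} ws \<partial>count_space UNIV)"
  proof -
    have "(\<lambda>ws. ennreal (walkw \<mu> t g ws) * indicator {ws. length ws = 0} ws) = (\<lambda>ws. indicator {[]} ws :: ennreal)"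
      by (auto simp: indicator_def fun_eq_iff)
    then show ?thesis by simp
  qed
  also have "(\<integral>\<^sup>+ ws. indicator {[]} ws \<partial>count_space UNIV) = (1::ennreal)" by simp
  finally show ?case by simp
next
  case (Suc k)
  let ?Q = "\<integral>\<^sup>+ x. ennreal (rho \<mu> t x) \<partial>count_space UNIV"
  define f where "f ws = ennreal (walkw \<mu> t g ws) * indicator {ws. length ws = Suc k} ws" for ws
  have "(\<integral>\<^sup>+ ws. f ws \<partial>count_space UNIV) = (\<integral>\<^sup>+ ws. f ws \<partial>count_space (UNIV - {[]}))"
    by (rule nn_integral_count_space_eq) (auto simp: f_def)
  also have "\<dots> = (\<integral>\<^sup>+ p. f (fst p # snd p) \<partial>count_space UNIV)"
  proof (rule nn_integral_bij_count_space[symmetric])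
    show "bij_betw (\<lambda>p. fst p # snd p) UNIV (UNIV - {[]})"
      by (rule bij_betwI[where g = "\<lambda>xs. (hd xs, tl xs)"]) auto
  qed
  also have "\<dots> = (\<integral>\<^sup>+ w. \<integral>\<^sup>+ vs. f (w # vs) \<partial>count_space UNIV \<partial>count_space UNIV)"
    using nn_integral_fst_count_space[of "\<lambda>p. f (fst p # snd p)"] by simp
  also have "\<dots> = (\<integral>\<^sup>+ w. ennreal (rho \<mu> t (- g + w)) * ?Q ^ k \<partial>count_space UNIV)"
  proof (rule nn_integral_cong)
    fix w
    have "(\<integral>\<^sup>+ vs. f (w # vs) \<partial>count_space UNIV)
        = (\<integral>\<^sup>+ vs. ennreal (rho \<mu> t (- g + w)) * (ennreal (walkw \<mu> t w vs) * indicator {ws. length ws = k} vs) \<partial>count_space UNIV)"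
      by (rule nn_integral_cong)
         (simp add: f_def indicator_def ennreal_mult rho_nonneg[OF t] walkw_nonneg[OF t] mult.assoc)
    also have "\<dots> = ennreal (rho \<mu> t (- g + w)) * ?Q ^ k"
      by (simp add: nn_integral_cmult Suc.IH)
    finally show "(\<integral>\<^sup>+ vs. f (w # vs) \<partial>count_space UNIV) = ennreal (rho \<mu> t (- g + w)) * ?Q ^ k" .
  qed
  also have "\<dots> = ?Q ^ k * (\<integral>\<^sup>+ w. ennreal (rho \<mu> t (- g + w)) \<partial>count_space UNIV)"
    by (simp add: nn_integral_multc mult.commute)
  also have "\<dots> = ?Q ^ Suc k"
    using translate_sum[of "\<lambda>x. ennreal (rho \<mu> t x)" g] by (simp add: mult.commute)
  finally show ?case by (simp add: f_def)
qed

lemma sum_all: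
  assumes t: "t \<ge> 0"
  shows "(\<integral>\<^sup>+ ws. ennreal (walkw \<mu> t g ws) \<partial>count_space UNIV)
      = (\<Sum>k. (\<integral>\<^sup>+ x. ennreal (rho \<mu> t x) \<partial>count_space UNIV) ^ k)"
proof -
  have eq: "ennreal (walkw \<mu> t g ws) = (\<Sum>k. ennreal (walkw \<mu> t g ws) * indicator {ws. length ws = k} ws)" for ws
  proof -
    have "(\<lambda>k. ennreal (walkw \<mu> t g ws) * indicator {ws. length ws = k} ws)
        = (\<lambda>k. if k = length ws then ennreal (walkw \<mu> t g ws) else 0)"
      by (auto simp: indicator_def)
    moreover have "(\<lambda>k. if k = length ws then ennreal (walkw \<mu> t g ws) else 0) sums ennreal (walkw \<mu> t g ws)"
      using sums_single[of "length ws" "\<lambda>_. ennreal (walkw \<mu> t g ws)"] by simp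
    ultimately show ?thesis by (simp add: sums_iff)
  qed
  have "(\<integral>\<^sup>+ ws. ennreal (walkw \<mu> t g ws) \<partial>count_space UNIV)
      = (\<integral>\<^sup>+ ws. (\<Sum>k. ennreal (walkw \<mu> t g ws) * indicator {ws. length ws = k} ws) \<partial>count_space UNIV)"
    by (subst eq) (rule refl)
  also have "\<dots> = (\<Sum>k. \<integral>\<^sup>+ ws. ennreal (walkw \<mu> t g ws) * indicator {ws. length ws = k} ws \<partial>count_space UNIV)"
    by (rule nn_integral_suminf) simp
  also have "\<dots> = (\<Sum>k. (\<integral>\<^sup>+ x. ennreal (rho \<mu> t x) \<partial>count_space UNIV) ^ k)"
    by (simp add: sum_len[OF t])
  finally show ?thesis .
qed

lemma geom_finite:
  fixes Q :: ennreal
  assumes "Q < 1"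
  shows "(\<Sum>k. Q ^ k) < \<infinity>"
proof -
  obtain q where q: "Q = ennreal q" "q \<ge> 0"
    using assms by (cases Q rule: ennreal_cases) auto
  then have q1: "q < 1" using assms by (simp add: ennreal_less_iff)
  have "(\<Sum>k. Q ^ k) = (\<Sum>k. ennreal (q ^ k))" using q by (simp add: ennreal_power)
  also have "\<dots> = ennreal (\<Sum>k. q ^ k)"
    using q q1 by (intro suminf_ennreal2) (auto intro: summable_geometric)
  finally show ?thesis by simp
qed

lemma measurable_count_sum:
  fixes f :: "'i \<Rightarrow> 'b \<Rightarrow> ennreal"
  assumes "countable (UNIV :: 'i set)" "infinite (UNIV :: 'i set)"
    and "\<And>i. f i \<in> borel_measurable M"
  shows "(\<lambda>x. \<integral>\<^sup>+ i. f i x \<partial>count_space UNIV) \<in> borel_measurable M"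
proof -
  note * = bij_betw_from_nat_into[OF assms(1,2)]
  have "(\<integral>\<^sup>+ i. f i x \<partial>count_space UNIV) = (\<Sum>n. f (from_nat_into UNIV n) x)" for x
    by (simp add: nn_integral_bij_count_space[symmetric, OF *] nn_integral_count_space_nat)
  then have "(\<lambda>x. \<integral>\<^sup>+ i. f i x \<partial>count_space UNIV) = (\<lambda>x. \<Sum>n. f (from_nat_into UNIV n) x)"
    by auto
  moreover have "(\<lambda>x. \<Sum>n. f (from_nat_into UNIV n) x) \<in> borel_measurable M"
    using assms(3) by (intro borel_measurable_suminf_order) auto
  ultimately show ?thesis by simp
qed



lemma perc:
  fixes \<mu> :: "'a::group_add pmf"
  assumes cG: "countable (UNIV :: 'a set)" and sym: "\<mu> \<in> sym_measures" and t: "0 < t"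
    and Q: "(\<integral>\<^sup>+ x. ennreal (rho \<mu> t x) \<partial>count_space UNIV) < 1"
  shows "measure (multigraph_space \<mu> t) {\<omega> \<in> space (multigraph_space \<mu> t). has_infinite_component \<omega>} = 0"
proof -
  define M where "M = Pi\<^sub>M pairs (Mf \<mu> t)"
  have MM: "multigraph_space \<mu> t = M" unfolding M_def by (rule ms_eq)
  define F where "F g \<omega> = (\<integral>\<^sup>+ ws. indicator {ws. distinct (g # ws)} ws * indicator (OpenE \<mu> t g ws) \<omega> \<partial>count_space UNIV)"
    for g :: 'a and \<omega>
  have cL: "countable (UNIV :: 'a list set)"
    using countable_lists[OF cG] by simp
  have iL: "infinite (UNIV :: 'a list set)" by (rule infinite_UNIV_listI)
  have meas: "F g \<in> borel_measurable M" for g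
    unfolding F_def
    by (rule measurable_count_sum[OF cL iL])
       (intro borel_measurable_times_ennreal borel_measurable_const borel_measurable_indicator,
        simp add: M_def OpenE_sets)
  have int: "(\<integral>\<^sup>+ \<omega>. F g \<omega> \<partial>M) < \<infinity>" for g
  proof -
    have "(\<integral>\<^sup>+ \<omega>. F g \<omega> \<partial>M)
        = (\<integral>\<^sup>+ ws. \<integral>\<^sup>+ \<omega>. indicator {ws. distinct (g # ws)} ws * indicator (OpenE \<mu> t g ws) \<omega> \<partial>M \<partial>count_space UNIV)"
      unfolding F_def
      by (rule nn_integral_count_space_nn_integral[OF cL])
         (intro borel_measurable_times_ennreal borel_measurable_const borel_measurable_indicator,
          simp add: M_def OpenE_sets)
    also have "\<dots> \<le> (\<integral>\<^sup>+ ws. ennreal (walkw \<mu> t g ws) \<partial>count_space UNIV)"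
    proof (rule nn_integral_mono)
      fix ws
      show "(\<integral>\<^sup>+ \<omega>. indicator {ws. distinct (g # ws)} ws * indicator (OpenE \<mu> t g ws) \<omega> \<partial>M)
          \<le> ennreal (walkw \<mu> t g ws)"
      proof (cases "distinct (g # ws)")
        case True
        then have "(\<integral>\<^sup>+ \<omega>. indicator {ws. distinct (g # ws)} ws * indicator (OpenE \<mu> t g ws) \<omega> \<partial>M)
            = emeasure M (OpenE \<mu> t g ws)"
          by (simp add: M_def OpenE_sets)
        also have "\<dots> = ennreal (walkw \<mu> t g ws)"
          unfolding M_def using emeasure_OpenE[OF sym _ True] t by simp
        finally show ?thesis by simp
      next
        case False
        then show ?thesis by simp
      qed
    qed
    also have "\<dots> = (\<Sum>k. (\<integral>\<^sup>+ x. ennreal (rho \<mu> t x) \<partial>count_space UNIV) ^ k)"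
      using t by (simp add: sum_all)
    also have "\<dots> < \<infinity>" by (rule geom_finite[OF Q])
    finally show ?thesis .
  qed
  have ae1: "AE \<omega> in M. F g \<omega> \<noteq> \<infinity>" for g
    using nn_integral_PInf_AE[OF meas[of g]] int[of g] by (simp add: less_top)
  have ae2: "AE \<omega> in M. \<forall>g\<in>UNIV. F g \<omega> \<noteq> \<infinity>"
    using ae1 by (subst AE_ball_countable[OF cG]) simp
  have key: "\<not> has_infinite_component \<omega>" if \<omega>: "\<omega> \<in> space M" and fin: "\<forall>g\<in>UNIV. F g \<omega> \<noteq> \<infinity>" for \<omega>
  proof
    assume "has_infinite_component \<omega>"
    then obtain g where inf: "infinite {h. (g, h) \<in> (adjacent \<omega>)\<^sup>*}"
      unfolding has_infinite_component_def by blast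
    define X where "X = {ws. distinct (g # ws) \<and> \<omega> \<in> OpenE \<mu> t g ws}"
    have "{h. (g, h) \<in> (adjacent \<omega>)\<^sup>*} \<subseteq> (\<lambda>ws. last (g # ws)) ` X"
    proof
      fix h assume "h \<in> {h. (g, h) \<in> (adjacent \<omega>)\<^sup>*}"
      then have "(\<lambda>a b. (a, b) \<in> adjacent \<omega>)\<^sup>*\<^sup>* g h"
        by (simp add: rtranclp_rtrancl_eq)
      then obtain xs where "rtrancl_path (\<lambda>a b. (a, b) \<in> adjacent \<omega>) g xs h"
        by (auto simp: rtranclp_eq_rtrancl_path)
      then obtain ws where p: "rtrancl_path (\<lambda>a b. (a, b) \<in> adjacent \<omega>) g ws h"
        and d: "distinct (g # ws)"
        by (rule rtrancl_path_distinct)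
      have "ws \<in> X" unfolding X_def using d path_open[OF _ p] \<omega> by (simp add: M_def)
      moreover have "h = last (g # ws)" using path_last[OF p] by simp
      ultimately show "h \<in> (\<lambda>ws. last (g # ws)) ` X" by blast
    qed
    then have infX: "infinite X" using inf finite_surj by blast
    have "F g \<omega> = (\<integral>\<^sup>+ ws. indicator X ws \<partial>count_space UNIV)"
      unfolding F_def X_def by (rule nn_integral_cong) (simp add: indicator_def)
    also have "\<dots> = emeasure (count_space UNIV) X" by simp
    also have "\<dots> = \<infinity>" using infX by (simp add: emeasure_count_space_infinite)
    finally show False using fin by simp
  qed
  have ae3: "AE \<omega> in M. \<not> has_infinite_component \<omega>"
  proof (rule AE_mp[OF ae2], rule AE_I2)
    fix \<omega> assume "\<omega> \<in> space M"
    then show "(\<forall>g\<in>UNIV. F g \<omega> \<noteq> \<infinity>) \<longrightarrow> \<not> has_infinite_component \<omega>"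
      using key by blast
  qed
  then obtain N where N: "{\<omega> \<in> space M. \<not> \<not> has_infinite_component \<omega>} \<subseteq> N" "emeasure M N = 0" "N \<in> sets M"
    by (rule AE_E)
  let ?A = "{\<omega> \<in> space M. has_infinite_component \<omega>}"
  have "measure M ?A = 0"
  proof (cases "?A \<in> sets M")
    case True
    have "emeasure M ?A \<le> emeasure M N" using N True by (intro emeasure_mono) auto
    then have "emeasure M ?A = 0" using N by simp
    then show ?thesis by (simp add: measure_def)
  next
    case False
    then show ?thesis by (simp add: measure_notin_sets)
  qed
  then show ?thesis using MM by simp
qed



lemma summable_a:
  fixes r r' s s' :: real
  assumes r: "r > 1" and r': "0 < r'" "r' < 1" and ss: "s < s'" and s': "0 < s'"
  shows "summable (\<lambda>n::nat. r powr (real n powr s) * r' powr (real n powr s'))"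
proof -
  define L where "L = ln r"
  define c where "c = - ln r'"
  define e where "e = s' - s"
  have L: "L > 0" using r by (simp add: L_def)
  have c: "c > 0" using r' by (simp add: c_def)
  have e: "e > 0" using ss by (simp add: e_def)
  have eq: "r powr (real n powr s) * r' powr (real n powr s')
      = exp (real n powr s' * (L * real n powr (-e) - c))" for n :: nat
  proof -
    have "real n powr s = real n powr s' * real n powr (-e)"
      by (simp add: e_def powr_add[symmetric])
    then show ?thesis using r r'
      by (simp add: powr_def L_def c_def exp_add[symmetric] algebra_simps)
  qed
  have lim: "((\<lambda>n::nat. exp (real n powr s' * (L * real n powr (-e) - c)) * real n ^ 2) \<longlongrightarrow> 0) at_top"
    using L c e s' by real_asymp
  have ev: "eventually (\<lambda>n::nat. exp (real n powr s' * (L * real n powr (-e) - c)) * real n ^ 2 < 1) at_top"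
    using order_tendstoD(2)[OF lim] by simp
  have "eventually (\<lambda>n::nat. norm (r powr (real n powr s) * r' powr (real n powr s'))
      \<le> inverse (real n ^ 2)) sequentially"
    using ev eventually_gt_at_top[of "0::nat"]
  proof (eventually_elim)
    case (elim n)
    then have "exp (real n powr s' * (L * real n powr (-e) - c)) \<le> inverse (real n ^ 2)"
      by (simp add: field_simps)
    then show ?case using r r' by (simp add: eq)
  qed
  then show ?thesis
    by (rule summable_comparison_test_ev) (rule inverse_power_summable, simp)
qed

lemma exp_quad: "0 \<le> (a::real) \<Longrightarrow> a \<le> 2 \<Longrightarrow> 1 - exp (- a) \<le> a - a\<^sup>2 / 4"
proof -
  assume "0 \<le> a" "a \<le> 2"
  then have "(1 - a / of_nat 2) ^ 2 \<le> exp (- a)"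
    by (intro exp_ge_one_minus_x_over_n_power_n) auto
  then show ?thesis by (simp add: power2_eq_square field_simps)
qed



lemma Q_bound:
  fixes \<mu> :: "'a::group_add pmf"
  assumes B: "finite B" and t1: "1 \<le> t" and t2: "t \<le> 2"
  shows "(\<integral>\<^sup>+ x. ennreal (rho \<mu> t x) \<partial>count_space UNIV) + ennreal (\<Sum>x\<in>B. (pmf \<mu> x)\<^sup>2 / 4) \<le> ennreal t"
proof -
  have pw: "ennreal (rho \<mu> t x) + ennreal (indicator B x * ((pmf \<mu> x)\<^sup>2 / 4)) \<le> ennreal (t * pmf \<mu> x)" for x
  proof -
    let ?a = "t * pmf \<mu> x"
    have p0: "0 \<le> pmf \<mu> x" and p1: "pmf \<mu> x \<le> 1" by (simp_all add: pmf_le_1)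
    have a0: "0 \<le> ?a" using t1 p0 by simp
    have a2: "?a \<le> 2" using mult_mono[OF t2 p1] t1 p0 by simp
    have main: "rho \<mu> t x + indicator B x * ((pmf \<mu> x)\<^sup>2 / 4) \<le> ?a"
    proof (cases "x \<in> B")
      case True
      have "pmf \<mu> x \<le> ?a" using t1 p0 by (simp add: mult_le_cancel_right1)
      then have "(pmf \<mu> x)\<^sup>2 \<le> ?a\<^sup>2" using p0 by (intro power_mono) auto
      with exp_quad[OF a0 a2] show ?thesis using True by (simp add: rho_def)
    next
      case False
      have "1 - exp (- ?a) \<le> ?a" using exp_ge_add_one_self[of "- ?a"] by simp
      then show ?thesis using False by (simp add: rho_def)
    qed
    have n1: "0 \<le> rho \<mu> t x" using t1 by (intro rho_nonneg) simp
    have n2: "0 \<le> indicator B x * ((pmf \<mu> x)\<^sup>2 / 4)" by simp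
    have e: "ennreal (rho \<mu> t x + indicator B x * ((pmf \<mu> x)\<^sup>2 / 4))
        = ennreal (rho \<mu> t x) + ennreal (indicator B x * ((pmf \<mu> x)\<^sup>2 / 4))"
      by (rule ennreal_plus[OF n1 n2])
    show ?thesis using ennreal_leI[OF main] unfolding e .
  qed
  have ind: "(\<integral>\<^sup>+ x. ennreal (indicator B x * ((pmf \<mu> x)\<^sup>2 / 4)) \<partial>count_space UNIV)
      = ennreal (\<Sum>x\<in>B. (pmf \<mu> x)\<^sup>2 / 4)"
  proof -
    have "(\<integral>\<^sup>+ x. ennreal (indicator B x * ((pmf \<mu> x)\<^sup>2 / 4)) \<partial>count_space UNIV)
        = (\<integral>\<^sup>+ x. ennreal ((pmf \<mu> x)\<^sup>2 / 4) * indicator B x \<partial>count_space UNIV)"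
      by (rule nn_integral_cong) (simp add: indicator_def)
    also have "\<dots> = (\<integral>\<^sup>+ x. ennreal ((pmf \<mu> x)\<^sup>2 / 4) \<partial>count_space B)"
      by (rule nn_integral_count_space_indicator[symmetric]) simp
    also have "\<dots> = (\<Sum>x\<in>B. ennreal ((pmf \<mu> x)\<^sup>2 / 4))"
      by (rule nn_integral_count_space_finite[OF B])
    also have "\<dots> = ennreal (\<Sum>x\<in>B. (pmf \<mu> x)\<^sup>2 / 4)" by simp
    finally show ?thesis .
  qed
  have "(\<integral>\<^sup>+ x. ennreal (rho \<mu> t x) \<partial>count_space UNIV) + ennreal (\<Sum>x\<in>B. (pmf \<mu> x)\<^sup>2 / 4)
      = (\<integral>\<^sup>+ x. ennreal (rho \<mu> t x) + ennreal (indicator B x * ((pmf \<mu> x)\<^sup>2 / 4)) \<partial>count_space UNIV)"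
    unfolding ind[symmetric] by (rule nn_integral_add[symmetric]) auto
  also have "\<dots> \<le> (\<integral>\<^sup>+ x. ennreal (t * pmf \<mu> x) \<partial>count_space UNIV)"
    by (rule nn_integral_mono) (rule pw)
  also have "\<dots> = (\<integral>\<^sup>+ x. ennreal t * ennreal (pmf \<mu> x) \<partial>count_space UNIV)"
    using t1 by (simp add: ennreal_mult)
  also have "\<dots> = ennreal t"
    by (simp add: nn_integral_cmult nn_integral_pmf_eq_1)
  finally show ?thesis .
qed

lemma lc_lower:
  fixes \<mu> :: "'a::group_add pmf"
  assumes cG: "countable (UNIV :: 'a set)" and sym: "\<mu> \<in> sym_measures"
    and B: "finite B" and K: "card B > 0" and half: "measure (measure_pmf \<mu>) B \<ge> 1 / 2"
  shows "lambda_c \<mu> \<ge> ereal (1 + 1 / (32 * real (card B)))"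
proof -
  define K where "K = real (card B)"
  define d where "d = 1 / (32 * K)"
  define t where "t = 1 + d"
  have K1: "K \<ge> 1" using K by (simp add: K_def)
  have d0: "d > 0" and d1: "d \<le> 1 / 32" using K1 by (simp_all add: d_def field_simps)
  have t1: "1 \<le> t" and t2: "t \<le> 2" using d0 d1 by (simp_all add: t_def)
  have sB: "(\<Sum>x\<in>B. pmf \<mu> x) = measure (measure_pmf \<mu>) B"
    by (simp add: measure_measure_pmf_finite[OF B])
  have cs: "(\<Sum>x\<in>B. pmf \<mu> x)\<^sup>2 \<le> (\<Sum>x\<in>B. (pmf \<mu> x)\<^sup>2) * K"
    unfolding K_def by (rule sum_squared_le_sum_of_squares)
  have "1 / 4 \<le> (\<Sum>x\<in>B. pmf \<mu> x)\<^sup>2"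
  proof -
    have "(1/2)\<^sup>2 \<le> (\<Sum>x\<in>B. pmf \<mu> x)\<^sup>2" using half sB by (intro power_mono) auto
    then show ?thesis by (simp add: power2_eq_square)
  qed
  then have "1 / 4 \<le> (\<Sum>x\<in>B. (pmf \<mu> x)\<^sup>2) * K" using cs by simp
  then have sq: "2 * d \<le> (\<Sum>x\<in>B. (pmf \<mu> x)\<^sup>2 / 4)"
    using K1 by (simp add: d_def sum_divide_distrib[symmetric] field_simps)
  let ?Q = "\<integral>\<^sup>+ x. ennreal (rho \<mu> t x) \<partial>count_space UNIV"
  have QB: "?Q + ennreal (\<Sum>x\<in>B. (pmf \<mu> x)\<^sup>2 / 4) \<le> ennreal t"
    by (rule Q_bound[OF B t1 t2])
  have "?Q \<noteq> \<infinity>"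
  proof
    assume "?Q = \<infinity>" then show False using QB by (simp add: top_unique)
  qed
  then obtain q where q: "?Q = ennreal q" "q \<ge> 0" by (cases ?Q rule: ennreal_cases) auto
  have "ennreal (q + (\<Sum>x\<in>B. (pmf \<mu> x)\<^sup>2 / 4)) \<le> ennreal t"
    using QB q by (simp add: ennreal_plus[symmetric] sum_nonneg del: ennreal_plus)
  then have "q + (\<Sum>x\<in>B. (pmf \<mu> x)\<^sup>2 / 4) \<le> t" using t1 by (simp add: ennreal_le_iff)
  then have "q < 1" using sq d0 by (simp add: t_def)
  then have Q1: "?Q < 1" using q by simp
  have "measure (multigraph_space \<mu> t) {\<omega> \<in> space (multigraph_space \<mu> t). has_infinite_component \<omega>} = 0"
    by (rule perc[OF cG sym _ Q1]) (use t1 in simp)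
  then have "ereal t \<in> ereal ` {t. t > 0 \<and> measure (multigraph_space \<mu> t)
        {\<omega> \<in> space (multigraph_space \<mu> t). has_infinite_component \<omega>} = 0}"
    using t1 by auto
  then have "ereal t \<le> lambda_c \<mu>" unfolding lambda_c_def by (rule Sup_upper)
  then show ?thesis by (simp add: t_def d_def K_def)
qed



lemma tail:
  fixes S :: "'a::group_add set"
  assumes S: "finite S" "generates S" and r: "r > 1" and r': "0 < r'" "r' < 1"
    and ss: "s < s'" and s': "0 < s'"
    and growth: "\<forall>n::nat. n \<ge> 1 \<longrightarrow> real (card (ball_X S n)) < r powr (real n powr s)"
  shows "\<exists>N. \<forall>\<mu>\<in>exp_measures S s' r'. measure (measure_pmf \<mu>) (ball_X S N) \<ge> 1 / 2"
proof -
  define a where "a n = r powr (real n powr s) * r' powr (real n powr s')" for n :: nat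
  have sa: "summable a" unfolding a_def by (rule summable_a[OF r r' ss s'])
  have a0: "a n \<ge> 0" for n by (simp add: a_def)
  obtain N0 where N0: "\<forall>n\<ge>N0. norm (\<Sum>i. a (i + n)) < 1 / 2"
    using suminf_exist_split[OF _ sa, of "1/2"] by auto
  have tailN: "(\<Sum>i. a (i + Suc N0)) < 1 / 2"
    using N0[rule_format, of "Suc N0"] a0 suminf_nonneg[OF summable_ignore_initial_segment[OF sa, of "Suc N0"]]
    by simp
  show ?thesis
  proof (intro exI ballI)
    fix \<mu> assume \<mu>: "\<mu> \<in> exp_measures S s' r'"
    have pb: "pmf \<mu> g < r' powr (real (word_length S g) powr s')" for g
      using \<mu> unfolding exp_measures_def by blast
    define A where "A i = {g. word_length S g = i + Suc N0}" for i
    have sph: "measure (measure_pmf \<mu>) (A i) \<le> a (i + Suc N0)" for i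
    proof -
      let ?m = "i + Suc N0"
      have sub: "A i \<subseteq> ball_X S ?m" unfolding A_def ball_X_def by auto
      have fb: "finite (ball_X S ?m)" by (rule ball_finite[OF S])
      then have fA: "finite (A i)" using sub finite_subset by blast
      have "measure (measure_pmf \<mu>) (A i) = (\<Sum>g\<in>A i. pmf \<mu> g)"
        by (rule measure_measure_pmf_finite[OF fA])
      also have "\<dots> \<le> (\<Sum>g\<in>A i. r' powr (real ?m powr s'))"
      proof (rule sum_mono)
        fix g assume "g \<in> A i"
        then have "word_length S g = ?m" unfolding A_def by simp
        then show "pmf \<mu> g \<le> r' powr (real ?m powr s')" using pb[of g] by simp
      qed
      also have "\<dots> = real (card (A i)) * r' powr (real ?m powr s')" by simp
      also have "\<dots> \<le> real (card (ball_X S ?m)) * r' powr (real ?m powr s')"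
        using card_mono[OF fb sub] by (intro mult_right_mono) auto
      also have "\<dots> \<le> r powr (real ?m powr s) * r' powr (real ?m powr s')"
        using growth[rule_format, of ?m] by (intro mult_right_mono) auto
      finally show ?thesis by (simp add: a_def)
    qed
    have sa': "summable (\<lambda>i. a (i + Suc N0))" by (rule summable_ignore_initial_segment[OF sa])
    have summ: "summable (\<lambda>i. measure (measure_pmf \<mu>) (A i))"
      by (rule summable_comparison_test'[OF sa']) (use sph in simp)
    have U: "- ball_X S N0 = (\<Union>i. A i)"
    proof (intro set_eqI iffI)
      fix g assume "g \<in> - ball_X S N0"
      then have "word_length S g > N0" unfolding ball_X_def by simp
      then have "word_length S g = (word_length S g - Suc N0) + Suc N0" by simp
      then show "g \<in> (\<Union>i. A i)" unfolding A_def by blast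
    next
      fix g assume "g \<in> (\<Union>i. A i)"
      then show "g \<in> - ball_X S N0" unfolding A_def ball_X_def by auto
    qed
    have "measure (measure_pmf \<mu>) (- ball_X S N0) \<le> (\<Sum>i. measure (measure_pmf \<mu>) (A i))"
      unfolding U by (rule measure_pmf.finite_measure_subadditive_countably) (auto simp: summ)
    also have "\<dots> \<le> (\<Sum>i. a (i + Suc N0))"
      by (rule suminf_le[OF _ summ sa']) (rule sph)
    also have "\<dots> < 1 / 2" by (rule tailN)
    finally have c: "measure (measure_pmf \<mu>) (- ball_X S N0) < 1 / 2" .
    have "measure (measure_pmf \<mu>) (UNIV - ball_X S N0) = 1 - measure (measure_pmf \<mu>) (ball_X S N0)"
      using measure_pmf.prob_compl[of "ball_X S N0" \<mu>] by simp
    moreover have "UNIV - ball_X S N0 = - ball_X S N0" by auto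
    ultimately show "measure (measure_pmf \<mu>) (ball_X S N0) \<ge> 1 / 2" using c by simp
  qed
qed

theorem proposition5:
  fixes S :: "'a::group_add set" and r s :: real
  assumes "finite S" and "generates S"
    and "r > 0"
    and "\<forall>n::nat. n \<ge> 1 \<longrightarrow> real (card (ball_X S n)) < r powr (real n powr s)"
  shows "epdim S \<le> ereal s"
proof -
  note S = assms(1,2)
  have cG: "countable (UNIV :: 'a set)" by (rule countable_G[OF S])
  have r1: "r > 1"
  proof -
    have "0 \<in> ball_X S 1" by (rule zero_in_ball)
    then have "card (ball_X S 1) \<ge> 1" using ball_finite[OF S, of 1]
      by (metis One_nat_def Suc_leI card_gt_0_iff empty_iff)
    moreover have "real (card (ball_X S 1)) < r" using assms(4)[rule_format, of 1] assms(3) by simp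
    ultimately show ?thesis by simp
  qed
  show ?thesis unfolding epdim_def
  proof (rule Sup_least)
    fix x assume "x \<in> ereal ` {s. 0 < s \<and> s \<le> 1 \<and>
      (\<exists>r. 0 < r \<and> r < 1 \<and> (INF \<mu>\<in>exp_measures S s r. lambda_c \<mu>) = 1)}"
    then obtain s' r' where x: "x = ereal s'" and s': "0 < s'" and r': "0 < r'" "r' < 1"
      and inf1: "(INF \<mu>\<in>exp_measures S s' r'. lambda_c \<mu>) = 1"
      by blast
    show "x \<le> ereal s"
    proof (rule ccontr)
      assume "\<not> x \<le> ereal s"
      then have ss: "s < s'" using x by simp
      obtain N where N: "\<forall>\<mu>\<in>exp_measures S s' r'. measure (measure_pmf \<mu>) (ball_X S N) \<ge> 1 / 2"
        using tail[OF S r1 r' ss s' assms(4)] by blast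
      define B where "B = ball_X S N"
      have fB: "finite B" unfolding B_def by (rule ball_finite[OF S])
      have "0 \<in> B" unfolding B_def by (rule zero_in_ball)
      then have cB: "card B > 0" using fB card_gt_0_iff by blast
      have "ereal (1 + 1 / (32 * real (card B))) \<le> (INF \<mu>\<in>exp_measures S s' r'. lambda_c \<mu>)"
      proof (rule INF_greatest)
        fix \<mu> assume \<mu>: "\<mu> \<in> exp_measures S s' r'"
        then have sym: "\<mu> \<in> sym_measures" unfolding exp_measures_def by blast
        show "ereal (1 + 1 / (32 * real (card B))) \<le> lambda_c \<mu>"
          by (rule lc_lower[OF cG sym fB cB]) (use N \<mu> in \<open>simp add: B_def\<close>)
      qed
      then have "ereal (1 + 1 / (32 * real (card B))) \<le> 1" using inf1 by simp
      moreover have "1 / (32 * real (card B)) > 0" using cB by simp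
      ultimately show False by simp
    qed
  qed
qed

end
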